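(* Let $\varepsilon$ be a real random variable with distribution $\mu_\varepsilon$, and suppose there are $z_0\in\mathbb{R}$ and $t>0$ such that $P(\varepsilon\in\{z_0+tz:z\in\mathbb{N}_0\})=1$ and $F_\varepsilon\{z_0\}>0$. Let $\lambda_{z_0}:=(F_\varepsilon\{z_0\})^{-1}$ and $\ddot u_{\varepsilon,+}(z):=\delta_{z,0}-\lambda_{z_0}F_\varepsilon\{z_0+tz\}$ for $z\in\mathbb{Z}$. Let $A\in\mathcal{B}(\mathbb{R})$ and $m_{t,A}:=\max\{a: a\in\mathbb{Z}\cap t^{-1}A\}$ (with $m_{t,A}:=-\infty$ if $\mathbb{Z}\cap t^{-1}A=\emptyset$), and suppose $m_{t,A}<\infty$. Then $$\sup_{m\in\mathbb{N}_0}|\Pi\{\delta_{\{-z_0\}}\}|(A,m)<\infty,$$ and for each fixed $m_0\in\mathbb{N}_0$ with $m_0\ge m_{t,A}$, $$\lim_{m\to\infty}\Pi\{\delta_{\{-z_0\}}\}(A,m)=\lambda_{z_0}\,\Pi\{\lambda_{z_0}\delta_{\{-z_0\}}\}(A,m_0)=\lambda_{z_0}\sum_{z=0}^\infty\gamma\{\ddot u_{\varepsilon,+}\}(z)\,\delta_{\{tz\}}(A).$$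
   Context: $F_\varepsilon\{x\}:=P(\varepsilon=x)$. $\delta_{\{x\}}$ is the Dirac measure at $x$ and $\delta_{z,0}=1$ if $z=0$, else $0$. For finite complex Borel measures $\mu,\nu$ on $\mathbb{R}$, $(\mu*\nu)(B):=\int\int\mathbf 1_B(x+y)\nu(dx)\mu(dy)$; $\mu^{*0}:=\delta_{\{0\}}$, $\mu^{*j}:=\mu*\mu^{*(j-1)}$. For a finite complex Borel measure $\eta$ on $\mathbb{R}$, set $\pi_{\eta*\mu_\varepsilon}:=\delta_{\{0\}}-\eta*\mu_\varepsilon$ and $\Pi\{\eta\}(B,m):=\sum_{\ell=0}^m\pi_{\eta*\mu_\varepsilon}^{*\ell}(B)$ for $B\in\mathcal{B}(\mathbb{R})$, $m\in\mathbb{N}_0$; $|\Pi\{\eta\}|(A,m)$ denotes the total variation on $A$ of the complex measure $\Pi\{\eta\}(\cdot,m)$. Discrete convolution powers: $\ddot u^{*0}(z):=\delta_{z,0}$, $\ddot u^{*j}(z):=\sum_{y\in\mathbb{Z}}\ddot u(z-y)\ddot u^{*(j-1)}(y)$; $\gamma\{\ddot u\}(z):=\sum_{j=0}^{z}\ddot u^{*j}(z)$ for $z\in\mathbb{Z}$ (empty sum $=0$). *)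

theory Defs
  imports "HOL-Probability.Probability"
begin

text \<open>Finite complex Borel measures on the reals are represented as finite linear
combinations  \<Sum> c_k M_k  of finite Borel measures M_k on the reals (every finite
complex Borel measure has such a representation, e.g. with four terms coming from
the Jordan decompositions of its real and imaginary parts).\<close>

type_synonym cmeas = "(complex \<times> real measure) list"

definition cm_val :: "cmeas \<Rightarrow> real set \<Rightarrow> complex" where
  "cm_val \<nu> B = (\<Sum>(c, M)\<leftarrow>\<nu>. c * complex_of_real (measure M B))"

definition cm_dirac :: "real \<Rightarrow> cmeas" where
  "cm_dirac x = [(1, return borel x)]"

definition cm_scale :: "complex \<Rightarrow> cmeas \<Rightarrow> cmeas" where
  "cm_scale a \<nu> = map (\<lambda>(c, M). (a * c, M)) \<nu>"

definition cm_minus :: "cmeas \<Rightarrow> cmeas \<Rightarrow> cmeas" where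
  "cm_minus \<mu> \<nu> = \<mu> @ cm_scale (-1) \<nu>"

definition cm_conv :: "cmeas \<Rightarrow> cmeas \<Rightarrow> cmeas" where
  "cm_conv \<mu> \<nu> = concat (map (\<lambda>(c, M). map (\<lambda>(d, N). (c * d, M \<star> N)) \<nu>) \<mu>)"

fun cm_pow :: "cmeas \<Rightarrow> nat \<Rightarrow> cmeas" where
  "cm_pow \<mu> 0 = cm_dirac 0"
| "cm_pow \<mu> (Suc j) = cm_conv \<mu> (cm_pow \<mu> j)"

definition pi_meas :: "cmeas \<Rightarrow> real measure \<Rightarrow> cmeas" where
  "pi_meas \<eta> \<mu>\<epsilon> = cm_minus (cm_dirac 0) (cm_conv \<eta> [(1, \<mu>\<epsilon>)])"

definition Pi_meas :: "cmeas \<Rightarrow> real measure \<Rightarrow> real set \<Rightarrow> nat \<Rightarrow> complex" where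
  "Pi_meas \<eta> \<mu>\<epsilon> B m = (\<Sum>l\<le>m. cm_val (cm_pow (pi_meas \<eta> \<mu>\<epsilon>) l) B)"

definition total_variation :: "(real set \<Rightarrow> complex) \<Rightarrow> real set \<Rightarrow> ennreal" where
  "total_variation f A =
     (SUP B \<in> {B :: nat \<Rightarrow> real set. disjoint_family B \<and> range B \<subseteq> sets borel \<and> (\<Union>i. B i) = A}.
        (\<Sum>i. ennreal (cmod (f (B i)))))"

fun dconv_pow :: "(int \<Rightarrow> real) \<Rightarrow> nat \<Rightarrow> int \<Rightarrow> real" where
  "dconv_pow u 0 z = (if z = 0 then 1 else 0)"
| "dconv_pow u (Suc j) z = (\<Sum>\<^sub>\<infinity>y::int. u (z - y) * dconv_pow u j y)"

definition gamma_seq :: "(int \<Rightarrow> real) \<Rightarrow> int \<Rightarrow> real" where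
  "gamma_seq u z = (if z < 0 then 0 else (\<Sum>j\<in>{0..nat z}. dconv_pow u j z))"

text \<open>m_{t,A} = max (Z \<inter> t^{-1} A), -infinity if empty, +infinity if unbounded.\<close>
definition m_tA :: "real \<Rightarrow> real set \<Rightarrow> ereal" where
  "m_tA t A = Sup ((\<lambda>a. ereal (real_of_int a)) ` {a::int. t * real_of_int a \<in> A})"

end

theory Submission
  imports Defs "HOL-Computational_Algebra.Formal_Power_Series"
begin

unbundle no vec_syntax
unbundle fps_syntax

definition lat :: "real \<Rightarrow> (nat \<Rightarrow> real) \<Rightarrow> real measure" where
  "lat t a = distr (density (count_space UNIV) (\<lambda>k. ennreal (a k))) borel (\<lambda>k. t * real k)"

lemma sets_lat[simp, measurable_cong]: "sets (lat t a) = sets borel"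
  by (simp add: lat_def)

lemma space_lat[simp]: "space (lat t a) = UNIV"
  by (simp add: lat_def)

lemma nn_integral_lat:
  assumes [measurable]: "f \<in> borel_measurable borel"
  shows "(\<integral>\<^sup>+x. f x \<partial>lat t a) = (\<Sum>k. ennreal (a k) * f (t * real k))"
  unfolding lat_def
  by (simp add: nn_integral_distr nn_integral_density nn_integral_count_space_nat)

lemma emeasure_lat:
  assumes [measurable]: "B \<in> sets borel"
  shows "emeasure (lat t a) B = (\<Sum>k. ennreal (a k) * indicator B (t * real k))"
  using nn_integral_lat[of "indicator B" t a] by simp

lemma finite_measure_lat:
  assumes "\<And>k. a k \<ge> 0" "summable a"
  shows "finite_measure (lat t a)"
proof
  have "emeasure (lat t a) (space (lat t a)) = (\<Sum>k. ennreal (a k))"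
    by (simp add: emeasure_lat[of UNIV, simplified])
  also have "\<dots> \<noteq> \<infinity>" using ennreal_suminf_neq_top[OF assms(2) assms(1)] by simp
  finally show "emeasure (lat t a) (space (lat t a)) \<noteq> \<infinity>" .
qed

lemma ennreal_suminf_swap:
  fixes f :: "nat \<Rightarrow> nat \<Rightarrow> ennreal"
  shows "(\<Sum>i. \<Sum>j. f i j) = (\<Sum>j. \<Sum>i. f i j)"
proof -
  have "(\<Sum>i. \<Sum>j. f i j) = (\<Sum>i. \<integral>\<^sup>+j. f i j \<partial>count_space UNIV)"
    by (simp add: nn_integral_count_space_nat)
  also have "\<dots> = (\<integral>\<^sup>+j. (\<Sum>i. f i j) \<partial>count_space UNIV)"
    by (rule nn_integral_suminf[symmetric]) simp
  also have "\<dots> = (\<Sum>j. \<Sum>i. f i j)"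
    by (simp add: nn_integral_count_space_nat)
  finally show ?thesis .
qed

lemma ennreal_suminf_shift:
  fixes h :: "nat \<Rightarrow> ennreal"
  shows "(\<Sum>j. h j) = (\<Sum>n. if i \<le> n then h (n - i) else 0)"
proof -
  have "(\<Sum>n. if i \<le> n then h (n - i) else 0) = (\<Sum>j. (if i \<le> j + i then h (j + i - i) else 0)) + (\<Sum>n<i. if i \<le> n then h (n - i) else 0)"
    by (rule suminf_offset) simp
  also have "\<dots> = (\<Sum>j. h j)" by simp
  finally show ?thesis by simp
qed

lemma cauchy_ennreal:
  fixes a b g :: "nat \<Rightarrow> ennreal"
  shows "(\<Sum>i. a i * (\<Sum>j. b j * g (i + j))) = (\<Sum>n. (\<Sum>i\<le>n. a i * b (n - i)) * g n)"
proof -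
  have "(\<Sum>i. a i * (\<Sum>j. b j * g (i + j))) = (\<Sum>i. \<Sum>j. a i * b j * g (i + j))"
    by (simp add: mult.assoc)
  also have "\<dots> = (\<Sum>i. \<Sum>n. if i \<le> n then a i * b (n - i) * g n else 0)"
  proof (rule suminf_cong)
    fix i
    show "(\<Sum>j. a i * b j * g (i + j)) = (\<Sum>n. if i \<le> n then a i * b (n - i) * g n else 0)"
      using ennreal_suminf_shift[of "\<lambda>j. a i * b j * g (i + j)" i] by (simp cong: if_cong)
  qed
  also have "\<dots> = (\<Sum>n. \<Sum>i. if i \<le> n then a i * b (n - i) * g n else 0)"
    by (rule ennreal_suminf_swap)
  also have "\<dots> = (\<Sum>n. (\<Sum>i\<le>n. a i * b (n - i) * g n))"
  proof (rule suminf_cong)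
    fix n
    have "(\<Sum>i. if i \<le> n then a i * b (n - i) * g n else 0) = (\<Sum>i\<le>n. if i \<le> n then a i * b (n - i) * g n else 0)"
      by (rule suminf_finite) simp_all
    also have "\<dots> = (\<Sum>i\<le>n. a i * b (n - i) * g n)" by (rule sum.cong) simp_all
    finally show "(\<Sum>i. if i \<le> n then a i * b (n - i) * g n else 0) = (\<Sum>i\<le>n. a i * b (n - i) * g n)" .
  qed
  also have "\<dots> = (\<Sum>n. (\<Sum>i\<le>n. a i * b (n - i)) * g n)"
    by (simp only: sum_distrib_right)
  finally show ?thesis .
qed

lemma lat_conv:
  assumes "\<And>k. a k \<ge> 0" "summable a" "\<And>k. b k \<ge> 0" "summable b"
  shows "lat t a \<star> lat t b = lat t (\<lambda>n. \<Sum>i\<le>n. a i * b (n - i))"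
proof (rule measure_eqI)
  show "sets (lat t a \<star> lat t b) = sets (lat t (\<lambda>n. \<Sum>i\<le>n. a i * b (n - i)))" by simp
  fix B assume "B \<in> sets (lat t a \<star> lat t b)"
  then have B[measurable]: "B \<in> sets borel" by simp
  have "emeasure (lat t a \<star> lat t b) B = \<integral>\<^sup>+x. \<integral>\<^sup>+y. indicator B (x + y) \<partial>lat t b \<partial>lat t a"
    by (rule convolution_emeasure') (auto intro: finite_measure_lat assms)
  also have "\<dots> = \<integral>\<^sup>+x. (\<Sum>j. ennreal (b j) * indicator B (x + t * real j)) \<partial>lat t a"
    by (rule nn_integral_cong) (simp add: nn_integral_lat)
  also have "\<dots> = (\<Sum>i. ennreal (a i) * (\<Sum>j. ennreal (b j) * indicator B (t * real i + t * real j)))"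
    by (rule nn_integral_lat) measurable
  also have "\<dots> = (\<Sum>i. ennreal (a i) * (\<Sum>j. ennreal (b j) * indicator B (t * real (i + j))))"
    by (simp add: distrib_left)
  also have "\<dots> = (\<Sum>n. (\<Sum>i\<le>n. ennreal (a i) * ennreal (b (n - i))) * indicator B (t * real n))"
    by (rule cauchy_ennreal[where g = "\<lambda>n. indicator B (t * real n)"])
  also have "\<dots> = (\<Sum>n. ennreal (\<Sum>i\<le>n. a i * b (n - i)) * indicator B (t * real n))"
  proof (rule suminf_cong)
    fix n
    have "(\<Sum>i\<le>n. ennreal (a i) * ennreal (b (n - i))) = ennreal (\<Sum>i\<le>n. a i * b (n - i))"
      by (subst sum_ennreal[symmetric]) (auto simp: assms ennreal_mult)
    then show "(\<Sum>i\<le>n. ennreal (a i) * ennreal (b (n - i))) * indicator B (t * real n) = ennreal (\<Sum>i\<le>n. a i * b (n - i)) * indicator B (t * real n)"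
      by simp
  qed
  also have "\<dots> = emeasure (lat t (\<lambda>n. \<Sum>i\<le>n. a i * b (n - i))) B" by (simp add: emeasure_lat)
  finally show "emeasure (lat t a \<star> lat t b) B = emeasure (lat t (\<lambda>n. \<Sum>i\<le>n. a i * b (n - i))) B" .
qed

lemma emeasure_lat_fin:
  assumes "t \<noteq> 0" "B \<in> sets borel" "finite K" "{k. t * real k \<in> B} \<subseteq> K"
  shows "emeasure (lat t a) B = (\<Sum>k\<in>K. ennreal (a k) * indicator B (t * real k))"
  unfolding emeasure_lat[OF assms(2)]
  by (rule suminf_finite) (use assms in \<open>auto simp: indicator_def\<close>)

lemma measure_lat_fin:
  assumes "t \<noteq> 0" "B \<in> sets borel" "finite K" "{k. t * real k \<in> B} \<subseteq> K" "\<And>k. a k \<ge> 0"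
  shows "measure (lat t a) B = (\<Sum>k\<in>K. a k * indicator B (t * real k))"
proof -
  have "emeasure (lat t a) B = ennreal (\<Sum>k\<in>K. a k * indicator B (t * real k))"
    using emeasure_lat_fin[OF assms(1-4)] assms(5)
    by (subst sum_ennreal[symmetric]) (auto simp: ennreal_mult ennreal_indicator)
  then show ?thesis unfolding measure_def using assms(5) by (simp add: sum_nonneg)
qed

lemma measure_lat_point:
  assumes "t \<noteq> 0" "\<And>k. a k \<ge> 0"
  shows "measure (lat t a) {t * real k} = a k"
  using measure_lat_fin[of t "{t * real k}" "{k}" a] assms by auto

lemma lat_delta0:
  "return borel 0 = lat t (\<lambda>k. if k = 0 then 1 else 0)"
proof (rule measure_eqI)
  fix B assume "B \<in> sets (return borel (0::real))"
  then have B: "B \<in> sets borel" by simp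
  have "emeasure (lat t (\<lambda>k. if k = 0 then 1 else 0)) B = (\<Sum>k. ennreal (if k = 0 then 1 else 0) * indicator B (t * real k))"
    by (rule emeasure_lat[OF B])
  also have "\<dots> = (\<Sum>k\<in>{0}. ennreal (if k = 0 then 1 else 0) * indicator B (t * real k))"
    by (rule suminf_finite) auto
  also have "\<dots> = indicator B 0" by simp
  finally show "emeasure (return borel 0) B = emeasure (lat t (\<lambda>k. if k = 0 then 1 else 0)) B"
    using B by simp
qed simp

lemma shifted_emeasure:
  fixes P :: "'a measure" and \<epsilon> :: "'a \<Rightarrow> real"
  assumes P: "prob_space P" and [measurable]: "\<epsilon> \<in> borel_measurable P" and t: "t > 0"
    and S: "measure P {\<omega> \<in> space P. \<epsilon> \<omega> \<in> {z\<^sub>0 + t * real z | z. True}} = 1"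
    and B[measurable]: "B \<in> sets borel"
  shows "emeasure (return borel (- z\<^sub>0) \<star> distr P borel \<epsilon>) B =
     (\<Sum>k. ennreal (measure (distr P borel \<epsilon>) {z\<^sub>0 + t * real k}) * indicator B (t * real k))"
proof -
  interpret prob_space P by (rule P)
  have fin1: "finite_measure (return borel (- z\<^sub>0))"
    by (rule finite_measureI) simp
  have fin2: "finite_measure (distr P borel \<epsilon>)"
    by (simp add: finite_measure_distr)
  have AE: "AE \<omega> in P. \<omega> \<in> {\<omega> \<in> space P. \<epsilon> \<omega> \<in> {z\<^sub>0 + t * real z | z. True}}"
    by (rule AE_prob_1) (use S in simp)
  have "emeasure (return borel (- z\<^sub>0) \<star> distr P borel \<epsilon>) B = emeasure (distr P borel \<epsilon> \<star> return borel (- z\<^sub>0)) B"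
    using convolution_commutative[OF fin1 fin2] by simp
  also have "\<dots> = \<integral>\<^sup>+x. \<integral>\<^sup>+y. indicator B (x + y) \<partial>return borel (- z\<^sub>0) \<partial>distr P borel \<epsilon>"
    by (rule convolution_emeasure') (use fin1 fin2 in auto)
  also have "\<dots> = \<integral>\<^sup>+x. indicator B (x + - z\<^sub>0) \<partial>distr P borel \<epsilon>"
    by (rule nn_integral_cong) (simp add: nn_integral_return)
  also have "\<dots> = \<integral>\<^sup>+\<omega>. indicator B (\<epsilon> \<omega> + - z\<^sub>0) \<partial>P"
    by (simp add: nn_integral_distr)
  also have "\<dots> = \<integral>\<^sup>+\<omega>. (\<Sum>k. indicator B (t * real k) * indicator {\<omega> \<in> space P. \<epsilon> \<omega> = z\<^sub>0 + t * real k} \<omega>) \<partial>P"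
  proof (rule nn_integral_cong_AE)
    show "AE \<omega> in P. indicator B (\<epsilon> \<omega> + - z\<^sub>0) = (\<Sum>k. indicator B (t * real k) * indicator {\<omega> \<in> space P. \<epsilon> \<omega> = z\<^sub>0 + t * real k} \<omega> :: ennreal)"
      using AE
    proof eventually_elim
      case (elim \<omega>)
      then obtain k0 where k0: "\<epsilon> \<omega> = z\<^sub>0 + t * real k0" and sp: "\<omega> \<in> space P" by auto
      have eq: "\<epsilon> \<omega> = z\<^sub>0 + t * real k \<longleftrightarrow> k = k0" for k
        using t k0 by auto
      have "(\<Sum>k. indicator B (t * real k) * indicator {\<omega> \<in> space P. \<epsilon> \<omega> = z\<^sub>0 + t * real k} \<omega> :: ennreal)
          = (\<Sum>k\<in>{k0}. indicator B (t * real k) * indicator {\<omega> \<in> space P. \<epsilon> \<omega> = z\<^sub>0 + t * real k} \<omega>)"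
        by (rule suminf_finite) (use eq sp in \<open>auto simp: indicator_def\<close>)
      also have "\<dots> = indicator B (\<epsilon> \<omega> + - z\<^sub>0)"
        using sp k0 by (simp add: indicator_def)
      finally show ?case by simp
    qed
  qed
  also have "\<dots> = (\<Sum>k. \<integral>\<^sup>+\<omega>. indicator B (t * real k) * indicator {\<omega> \<in> space P. \<epsilon> \<omega> = z\<^sub>0 + t * real k} \<omega> \<partial>P)"
    by (rule nn_integral_suminf) measurable
  also have "\<dots> = (\<Sum>k. indicator B (t * real k) * emeasure P {\<omega> \<in> space P. \<epsilon> \<omega> = z\<^sub>0 + t * real k})"
    by (rule suminf_cong, rule nn_integral_cmult_indicator) measurable
  also have "\<dots> = (\<Sum>k. ennreal (measure (distr P borel \<epsilon>) {z\<^sub>0 + t * real k}) * indicator B (t * real k))"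
  proof (rule suminf_cong)
    fix k
    have "measure (distr P borel \<epsilon>) {z\<^sub>0 + t * real k} = measure P {\<omega> \<in> space P. \<epsilon> \<omega> = z\<^sub>0 + t * real k}"
      by (subst measure_distr) (auto intro: arg_cong[where f="measure P"])
    then show "indicator B (t * real k) * emeasure P {\<omega> \<in> space P. \<epsilon> \<omega> = z\<^sub>0 + t * real k} = ennreal (measure (distr P borel \<epsilon>) {z\<^sub>0 + t * real k}) * indicator B (t * real k)"
      by (simp add: emeasure_eq_measure mult.commute)
  qed
  finally show ?thesis .
qed

lemma summable_rec:
  fixes a b :: "nat \<Rightarrow> real"
  assumes a0: "\<And>l. a l \<ge> 0" and b0: "\<And>l. b l \<ge> 0" and q: "0 \<le> q" "q < 1" and b: "summable b"
    and rec: "\<And>l. a (Suc l) \<le> q * a l + b l"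
  shows "summable a"
proof (rule summableI_nonneg_bounded[where x="(a 0 + suminf b) / (1 - q)"])
  show "0 \<le> a n" for n by (rule a0)
  have bnd: "(\<Sum>i<N. b i) \<le> suminf b" for N
    using b b0 by (intro sum_le_suminf) auto
  have step: "(\<Sum>i<Suc N. a i) \<le> a 0 + q * (\<Sum>i<N. a i) + suminf b" for N
  proof -
    have "(\<Sum>i<Suc N. a i) = a 0 + (\<Sum>i<N. a (Suc i))"
      by (simp only: sum.lessThan_Suc_shift)
    also have "(\<Sum>i<N. a (Suc i)) \<le> (\<Sum>i<N. q * a i + b i)"
      by (rule sum_mono) (rule rec)
    also have "\<dots> = q * (\<Sum>i<N. a i) + (\<Sum>i<N. b i)"
      by (simp add: sum.distrib sum_distrib_left)
    finally show ?thesis using bnd[of N] by linarith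
  qed
  fix n
  show "(\<Sum>i<n. a i) \<le> (a 0 + suminf b) / (1 - q)"
  proof (cases n)
    case 0
    then show ?thesis using a0[of 0] b b0 q by (simp add: suminf_nonneg)
  next
    case (Suc N)
    have mono: "(\<Sum>i<N. a i) \<le> (\<Sum>i<Suc N. a i)" using a0 by simp
    have "q * (\<Sum>i<N. a i) \<le> q * (\<Sum>i<Suc N. a i)"
      using mono q by (simp add: mult_left_mono)
    with step[of N] have "(1 - q) * (\<Sum>i<Suc N. a i) \<le> a 0 + suminf b"
      by (simp add: algebra_simps)
    then show ?thesis using Suc q by (simp add: field_simps)
  qed
qed

lemma fps_pow_nth_small:
  fixes R :: "'a::comm_ring_1 fps"
  assumes "R $ 0 = 0"
  shows "k < j \<Longrightarrow> (R ^ j) $ k = 0"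
proof (induction j arbitrary: k)
  case 0 then show ?case by simp
next
  case (Suc j)
  have "(R ^ Suc j) $ k = (\<Sum>i=0..k. R $ i * (R ^ j) $ (k - i))"
    by (simp add: fps_mult_nth)
  also have "\<dots> = 0"
  proof (rule sum.neutral, intro ballI)
    fix i assume "i \<in> {0..k}"
    show "R $ i * (R ^ j) $ (k - i) = 0"
    proof (cases "i = 0")
      case True then show ?thesis using assms by simp
    next
      case False then have "k - i < j" using Suc.prems \<open>i \<in> {0..k}\<close> by auto
      then show ?thesis using Suc.IH by simp
    qed
  qed
  finally show ?case .
qed

lemma fps_pow_summable:
  fixes P :: "complex fps"
  assumes q: "norm (P $ 0) < 1"
  shows "summable (\<lambda>l. norm ((P ^ l) $ k))"
proof (induction k rule: less_induct)
  case (less k)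
  define b where "b l = (\<Sum>i\<in>{0<..k}. norm (P $ i) * norm ((P ^ l) $ (k - i)))" for l
  have "summable b"
    unfolding b_def
    by (intro summable_sum summable_mult less) auto
  show ?case
  proof (rule summable_rec[where q = "norm (P $ 0)" and b = b])
    show "0 \<le> b l" for l unfolding b_def by (intro sum_nonneg) auto
    fix l
    have "(P ^ Suc l) $ k = (\<Sum>i=0..k. P $ i * (P ^ l) $ (k - i))"
      by (simp add: fps_mult_nth)
    also have "\<dots> = P $ 0 * (P ^ l) $ k + (\<Sum>i\<in>{0<..k}. P $ i * (P ^ l) $ (k - i))"
      by (subst sum.head) auto
    finally have "norm ((P ^ Suc l) $ k) \<le> norm (P $ 0 * (P ^ l) $ k) + norm (\<Sum>i\<in>{0<..k}. P $ i * (P ^ l) $ (k - i))"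
      by (simp add: norm_triangle_ineq)
    also have "norm (\<Sum>i\<in>{0<..k}. P $ i * (P ^ l) $ (k - i)) \<le> b l"
      unfolding b_def by (rule order.trans[OF norm_sum]) (simp add: norm_mult)
    finally show "norm ((P ^ Suc l) $ k) \<le> norm (P $ 0) * norm ((P ^ l) $ k) + b l"
      by (simp add: norm_mult)
  qed (use \<open>summable b\<close> q in auto)
qed

lemma fps_limit:
  fixes F :: "complex fps" and p0 :: real
  assumes F0: "F $ 0 = of_real p0" and p0: "0 < p0" "p0 \<le> 1" and k: "k \<le> m0"
  shows "(\<lambda>m. \<Sum>l\<le>m. ((1 - F) ^ l) $ k) \<longlonglongrightarrow>
           of_real (1 / p0) * (\<Sum>l\<le>m0. ((1 - fps_const (of_real (1 / p0)) * F) ^ l) $ k)"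
proof -
  define P where "P = 1 - F"
  define R where "R = 1 - fps_const (of_real (1 / p0)) * F"
  define lam :: complex where "lam = of_real (1 / p0)"
  have "P $ 0 = complex_of_real (1 - p0)" using F0 by (simp add: P_def)
  then have nP: "norm (P $ 0) < 1" using p0 by (simp only: norm_of_real)
  have summ: "summable (\<lambda>l. (P ^ l) $ j)" for j
    by (rule summable_norm_cancel) (rule fps_pow_summable[OF nP])
  define s where "s j = (\<Sum>l. (P ^ l) $ j)" for j
  have T: "(\<lambda>m. \<Sum>l\<le>m. (P ^ l) $ j) \<longlonglongrightarrow> s j" for j
    unfolding s_def by (rule summable_LIMSEQ'[OF summ])
  have zero: "(\<lambda>m. (P ^ m) $ j) \<longlonglongrightarrow> 0" for j
    using summable_LIMSEQ_zero[OF summ] .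
  define S where "S = Abs_fps s"
  have FS: "F * S = 1"
  proof (rule fps_ext)
    fix n
    have X1: "(\<lambda>m. \<Sum>i=0..n. F $ i * (\<Sum>l\<le>m. (P ^ l) $ (n - i))) \<longlonglongrightarrow> (\<Sum>i=0..n. F $ i * s (n - i))"
      by (intro tendsto_sum tendsto_mult tendsto_const T)
    have X2: "(\<Sum>i=0..n. F $ i * (\<Sum>l\<le>m. (P ^ l) $ (n - i))) = 1 $ n - (P ^ Suc m) $ n" for m
    proof -
      have "(\<Sum>i=0..n. F $ i * (\<Sum>l\<le>m. (P ^ l) $ (n - i))) = (F * (\<Sum>l\<le>m. P ^ l)) $ n"
        by (simp add: fps_mult_nth fps_sum_nth)
      also have "F * (\<Sum>l\<le>m. P ^ l) = 1 - P ^ Suc m"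
        unfolding one_diff_power_eq lessThan_Suc_atMost P_def by simp
      finally show ?thesis by simp
    qed
    have "(\<lambda>m. 1 $ n - (P ^ Suc m) $ n) \<longlonglongrightarrow> 1 $ n - 0"
      by (intro tendsto_diff tendsto_const LIMSEQ_Suc zero)
    then have "(\<lambda>m. \<Sum>i=0..n. F $ i * (\<Sum>l\<le>m. (P ^ l) $ (n - i))) \<longlonglongrightarrow> 1 $ n"
      by (simp add: X2)
    from LIMSEQ_unique[OF X1 this] show "(F * S) $ n = 1 $ n"
      by (simp add: fps_mult_nth S_def)
  qed
  define G where "G = fps_const lam * (\<Sum>l\<le>m0. R ^ l)"
  have lamF: "fps_const lam * F = 1 - R" by (simp add: R_def lam_def)
  have FG: "F * G = 1 - R ^ Suc m0"
  proof -
    have "F * G = (fps_const lam * F) * (\<Sum>l<Suc m0. R ^ l)"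
      by (simp add: G_def lessThan_Suc_atMost mult_ac)
    also have "\<dots> = 1 - R ^ Suc m0" unfolding lamF one_diff_power_eq ..
    finally show ?thesis .
  qed
  have "S = S * (F * G) + S * R ^ Suc m0"
    by (simp add: FG algebra_simps)
  also have "S * (F * G) = G"
    by (metis FS mult.assoc mult.commute mult_1)
  finally have SG: "S = G + S * R ^ Suc m0" .
  have R0: "R $ 0 = 0" using F0 p0 by (simp add: R_def)
  have "(S * R ^ Suc m0) $ k = 0"
    unfolding fps_mult_nth
  proof (rule sum.neutral, intro ballI)
    fix i assume "i \<in> {0..k}"
    have "(R ^ Suc m0) $ (k - i) = 0"
      by (rule fps_pow_nth_small[OF R0]) (use k in arith)
    then show "S $ i * (R ^ Suc m0) $ (k - i) = 0" by (simp only: mult_zero_right)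
  qed
  then have "s k = G $ k"
    using arg_cong[OF SG, of "\<lambda>f. f $ k"] by (simp add: S_def)
  also have "G $ k = lam * (\<Sum>l\<le>m0. (R ^ l) $ k)"
    by (simp add: G_def fps_sum_nth)
  finally show ?thesis
    using T[of k] by (simp add: P_def R_def lam_def)
qed

definition good :: "real \<Rightarrow> cmeas \<Rightarrow> bool" where
  "good t \<nu> \<longleftrightarrow> (\<forall>cM\<in>set \<nu>. \<exists>a. (\<forall>k. a k \<ge> 0) \<and> summable a \<and> snd cM = lat t a)"

definition cf :: "real \<Rightarrow> cmeas \<Rightarrow> complex fps" where
  "cf t \<nu> = Abs_fps (\<lambda>k. cm_val \<nu> {t * real k})"

definition mfps :: "(nat \<Rightarrow> real) \<Rightarrow> complex fps" where
  "mfps a = Abs_fps (\<lambda>k. of_real (a k))"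

lemma cm_val_Nil[simp]: "cm_val [] B = 0"
  by (simp add: cm_val_def)

lemma cm_val_Cons[simp]: "cm_val ((c, M) # \<nu>) B = c * of_real (measure M B) + cm_val \<nu> B"
  by (simp add: cm_val_def)

lemma cm_val_append[simp]: "cm_val (xs @ ys) B = cm_val xs B + cm_val ys B"
  by (simp add: cm_val_def)

lemma good_Nil[simp]: "good t []" by (simp add: good_def)

lemma good_Cons[simp]: "good t ((c, M) # \<nu>) \<longleftrightarrow> (\<exists>a. (\<forall>k. a k \<ge> 0) \<and> summable a \<and> M = lat t a) \<and> good t \<nu>"
  by (auto simp: good_def)

lemma good_append[simp]: "good t (xs @ ys) \<longleftrightarrow> good t xs \<and> good t ys"
  by (auto simp: good_def)

lemma cf_Nil[simp]: "cf t [] = 0"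
  by (simp add: cf_def fps_ext)

lemma cf_Cons:
  assumes "t \<noteq> 0" "\<And>k. a k \<ge> 0"
  shows "cf t ((c, lat t a) # \<nu>) = fps_const c * mfps a + cf t \<nu>"
  using assms by (simp add: cf_def mfps_def fps_ext measure_lat_point)

lemma cf_append[simp]: "cf t (xs @ ys) = cf t xs + cf t ys"
  by (simp add: cf_def fps_ext)

lemma mfps_conv: "mfps (\<lambda>n. \<Sum>i\<le>n. a i * b (n - i)) = mfps a * mfps b"
  by (simp add: mfps_def fps_ext fps_mult_nth atLeast0AtMost)

lemma conv_single:
  assumes t: "t \<noteq> 0" and "good t \<nu>" and a: "\<And>k. a k \<ge> 0" "summable a"
  shows "good t (map (\<lambda>(d, N). (c * d, lat t a \<star> N)) \<nu>) \<and>
         cf t (map (\<lambda>(d, N). (c * d, lat t a \<star> N)) \<nu>) = fps_const c * mfps a * cf t \<nu>"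
  using assms(2)
proof (induction \<nu>)
  case Nil then show ?case by simp
next
  case (Cons x \<nu>)
  obtain d N where x: "x = (d, N)" by (cases x)
  from Cons.prems x obtain b where b: "\<And>k. b k \<ge> 0" "summable b" "N = lat t b" and g: "good t \<nu>"
    by auto
  have conv: "lat t a \<star> N = lat t (\<lambda>n. \<Sum>i\<le>n. a i * b (n - i))"
    using lat_conv[OF a(1,2) b(1,2)] b(3) by simp
  have nn: "\<And>n. (\<Sum>i\<le>n. a i * b (n - i)) \<ge> 0"
    using a b by (intro sum_nonneg mult_nonneg_nonneg) auto
  have sm: "summable (\<lambda>n. \<Sum>i\<le>n. a i * b (n - i))"
  proof -
    have na: "summable (\<lambda>k. norm (a k))" using a by simp
    have nb: "summable (\<lambda>k. norm (b k))" using b by simp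
    show ?thesis using Cauchy_product_sums[OF na nb] by (rule sums_summable)
  qed
  let ?f = "\<lambda>(d, N). (c * d, lat t a \<star> N)"
  have m: "map ?f (x # \<nu>) = (c * d, lat t (\<lambda>n. \<Sum>i\<le>n. a i * b (n - i))) # map ?f \<nu>"
    by (simp add: x conv)
  from Cons.IH[OF g] have IH1: "good t (map ?f \<nu>)" and IH2: "cf t (map ?f \<nu>) = fps_const c * mfps a * cf t \<nu>"
    by auto
  have "good t (map ?f (x # \<nu>))"
    unfolding m good_Cons
    by (intro conjI exI[of _ "\<lambda>n. \<Sum>i\<le>n. a i * b (n - i)"]) (use nn sm IH1 in auto)
  moreover have "cf t (map ?f (x # \<nu>)) = fps_const c * mfps a * cf t (x # \<nu>)"
  proof -
    have "cf t (map ?f (x # \<nu>)) = fps_const (c * d) * mfps (\<lambda>n. \<Sum>i\<le>n. a i * b (n - i)) + cf t (map ?f \<nu>)"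
      unfolding m by (rule cf_Cons[OF t nn])
    also have "\<dots> = fps_const c * mfps a * cf t ((d, lat t b) # \<nu>)"
      unfolding IH2 mfps_conv cf_Cons[OF t b(1)] by (simp del: fps_const_mult add: fps_const_mult[symmetric] algebra_simps)
    finally show ?thesis using x b(3) by simp
  qed
  ultimately show ?case by (rule conjI)
qed

lemma cm_conv_Cons: "cm_conv ((c, M) # \<mu>) \<nu> = map (\<lambda>(d, N). (c * d, M \<star> N)) \<nu> @ cm_conv \<mu> \<nu>"
  by (simp add: cm_conv_def)

lemma cm_conv_Nil[simp]: "cm_conv [] \<nu> = []"
  by (simp add: cm_conv_def)

lemma cf_conv:
  assumes t: "t \<noteq> 0" and "good t \<mu>" "good t \<nu>"
  shows "good t (cm_conv \<mu> \<nu>) \<and> cf t (cm_conv \<mu> \<nu>) = cf t \<mu> * cf t \<nu>"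
  using assms(2)
proof (induction \<mu>)
  case Nil then show ?case by simp
next
  case (Cons x \<mu>)
  obtain c M where x: "x = (c, M)" by (cases x)
  from Cons.prems x obtain a where a: "\<And>k. a k \<ge> 0" "summable a" "M = lat t a" and g: "good t \<mu>"
    by auto
  from Cons.IH[OF g] conv_single[OF t assms(3) a(1,2), of c] show ?case
    by (simp add: x a(3) cm_conv_Cons cf_Cons[OF t a(1)] algebra_simps)
qed

lemma good_dirac0: "good t (cm_dirac 0)"
  unfolding cm_dirac_def lat_delta0[of t]
  by (simp, rule exI[of _ "\<lambda>k. if k = 0 then 1 else 0"]) auto

lemma cf_dirac0: "t \<noteq> 0 \<Longrightarrow> cf t (cm_dirac 0) = 1"
  unfolding cm_dirac_def lat_delta0[of t]
  by (subst cf_Cons) (auto simp: mfps_def fps_ext)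

lemma cf_pow:
  assumes t: "t \<noteq> 0" and g: "good t \<pi>"
  shows "good t (cm_pow \<pi> l) \<and> cf t (cm_pow \<pi> l) = cf t \<pi> ^ l"
proof (induction l)
  case 0 then show ?case using good_dirac0 cf_dirac0[OF t] by simp
next
  case (Suc l)
  then show ?case using cf_conv[OF t g, of "cm_pow \<pi> l"] by simp
qed

lemma good_scale: 
  assumes H: "good t \<nu>" shows "good t (cm_scale c \<nu>)"
  unfolding good_def
proof
  fix cM assume "cM \<in> set (cm_scale c \<nu>)"
  then obtain d N where dN: "(d, N) \<in> set \<nu>" "cM = (c * d, N)" by (auto simp: cm_scale_def)
  then show "\<exists>a. (\<forall>k. 0 \<le> a k) \<and> summable a \<and> snd cM = lat t a"
  proof -
    from H dN(1) have "\<exists>a. (\<forall>k. 0 \<le> a k) \<and> summable a \<and> snd (d, N) = lat t a"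
      unfolding good_def by (rule bspec)
    then show ?thesis using dN(2) by simp
  qed
qed

lemma cf_scale: "cf t (cm_scale c \<nu>) = fps_const c * cf t \<nu>"
proof -
  have "cm_val (cm_scale c \<nu>) B = c * cm_val \<nu> B" for B
    by (induction \<nu>) (auto simp: cm_scale_def algebra_simps)
  then show ?thesis by (simp add: cf_def fps_ext)
qed

lemma cm_val_fin:
  assumes t: "t \<noteq> 0" and "good t \<nu>" and B: "B \<in> sets borel" and K: "finite K" "{k. t * real k \<in> B} \<subseteq> K"
  shows "cm_val \<nu> B = (\<Sum>k\<in>K. cf t \<nu> $ k * of_real (indicator B (t * real k)))"
  using assms(2)
proof (induction \<nu>)
  case Nil then show ?case by simp
next
  case (Cons x \<nu>)
  obtain c M where x: "x = (c, M)" by (cases x)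
  from Cons.prems x obtain a where a: "\<And>k. a k \<ge> 0" "summable a" "M = lat t a" and g: "good t \<nu>"
    by auto
  have "measure M B = (\<Sum>k\<in>K. a k * indicator B (t * real k))"
    unfolding a(3) by (rule measure_lat_fin[OF t B K a(1)])
  then show ?case
    using Cons.IH[OF g]
    by (simp add: x a(3) cf_Cons[OF t a(1)] mfps_def sum_distrib_left algebra_simps sum.distrib)
qed

lemma shifted_lat:
  fixes P :: "'a measure" and \<epsilon> :: "'a \<Rightarrow> real"
  assumes P: "prob_space P" and [measurable]: "\<epsilon> \<in> borel_measurable P" and t: "t > 0"
    and S: "measure P {\<omega> \<in> space P. \<epsilon> \<omega> \<in> {z\<^sub>0 + t * real z | z. True}} = 1"
  shows "return borel (- z\<^sub>0) \<star> distr P borel \<epsilon> = lat t (\<lambda>k. measure (distr P borel \<epsilon>) {z\<^sub>0 + t * real k})"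
proof (rule measure_eqI)
  fix B assume "B \<in> sets (return borel (- z\<^sub>0) \<star> distr P borel \<epsilon>)"
  then have B: "B \<in> sets borel" by simp
  show "emeasure (return borel (- z\<^sub>0) \<star> distr P borel \<epsilon>) B = emeasure (lat t (\<lambda>k. measure (distr P borel \<epsilon>) {z\<^sub>0 + t * real k})) B"
    unfolding shifted_emeasure[OF assms B] emeasure_lat[OF B] ..
qed simp

lemma shifted_summable:
  fixes P :: "'a measure" and \<epsilon> :: "'a \<Rightarrow> real"
  assumes P: "prob_space P" and [measurable]: "\<epsilon> \<in> borel_measurable P" and t: "t > 0"
    and S: "measure P {\<omega> \<in> space P. \<epsilon> \<omega> \<in> {z\<^sub>0 + t * real z | z. True}} = 1"
  shows "summable (\<lambda>k. measure (distr P borel \<epsilon>) {z\<^sub>0 + t * real k})"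
proof (rule summable_suminf_not_top)
  interpret prob_space P by (rule P)
  have fin1: "finite_measure (return borel (- z\<^sub>0))"
    by (rule finite_measureI) simp
  have fin2: "finite_measure (distr P borel \<epsilon>)"
    by (simp add: finite_measure_distr)
  have "finite_measure (return borel (- z\<^sub>0) \<star> distr P borel \<epsilon>)"
    by (rule convolution_finite[OF fin1 fin2]) simp_all
  then have "emeasure (return borel (- z\<^sub>0) \<star> distr P borel \<epsilon>) UNIV \<noteq> top"
    by (rule finite_measure.emeasure_finite)
  moreover have "emeasure (return borel (- z\<^sub>0) \<star> distr P borel \<epsilon>) UNIV = (\<Sum>k. ennreal (measure (distr P borel \<epsilon>) {z\<^sub>0 + t * real k}) * indicator UNIV (t * real k))"
    by (rule shifted_emeasure[OF assms]) simp
  ultimately show "(\<Sum>k. ennreal (measure (distr P borel \<epsilon>) {z\<^sub>0 + t * real k})) \<noteq> top"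
    by simp
qed simp

lemma off_lattice:
  fixes P :: "'a measure" and \<epsilon> :: "'a \<Rightarrow> real"
  assumes P: "prob_space P" and [measurable]: "\<epsilon> \<in> borel_measurable P"
    and S: "measure P {\<omega> \<in> space P. \<epsilon> \<omega> \<in> {z\<^sub>0 + t * real z | z. True}} = 1"
    and x: "x \<notin> {z\<^sub>0 + t * real z | z. True}"
  shows "measure (distr P borel \<epsilon>) {x} = 0"
proof -
  interpret prob_space P by (rule P)
  have AE: "AE \<omega> in P. \<omega> \<in> {\<omega> \<in> space P. \<epsilon> \<omega> \<in> {z\<^sub>0 + t * real z | z. True}}"
    by (rule AE_prob_1) (use S in simp)
  have meas: "\<epsilon> -` {x} \<inter> space P \<in> sets P" by measurable
  have "AE \<omega> in P. \<omega> \<notin> \<epsilon> -` {x} \<inter> space P"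
    using AE by eventually_elim (use x in auto)
  then have "\<epsilon> -` {x} \<inter> space P \<in> null_sets P"
    by (subst AE_iff_null_sets[OF meas])
  then have "measure P (\<epsilon> -` {x} \<inter> space P) = 0"
    by (simp add: measure_def null_setsD1)
  then show ?thesis by (simp add: measure_distr)
qed

lemma tv_bound:
  fixes f :: "real set \<Rightarrow> complex" and c :: "nat \<Rightarrow> complex"
  assumes K: "finite K"
    and f: "\<And>B. B \<in> sets borel \<Longrightarrow> B \<subseteq> A \<Longrightarrow> f B = (\<Sum>k\<in>K. c k * of_real (indicator B (x k)))"
  shows "total_variation f A \<le> ennreal (\<Sum>k\<in>K. norm (c k))"
  unfolding total_variation_def
proof (rule SUP_least)
  fix B :: "nat \<Rightarrow> real set"
  assume "B \<in> {B. disjoint_family B \<and> range B \<subseteq> sets borel \<and> (\<Union>i. B i) = A}"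
  then have disj: "disjoint_family B" and Bs: "\<And>i. B i \<in> sets borel" and BA: "(\<Union>i. B i) = A" by auto
  have sub: "B i \<subseteq> A" for i using BA by auto
  have pt: "ennreal (norm (f (B i))) \<le> (\<Sum>k\<in>K. ennreal (norm (c k)) * indicator (B i) (x k))" for i
  proof -
    have "norm (f (B i)) \<le> (\<Sum>k\<in>K. norm (c k * of_real (indicator (B i) (x k))))"
      unfolding f[OF Bs sub] by (rule norm_sum)
    also have "\<dots> = (\<Sum>k\<in>K. norm (c k) * indicator (B i) (x k))"
      by (intro sum.cong) (auto simp: norm_mult indicator_def)
    finally have "ennreal (norm (f (B i))) \<le> ennreal (\<Sum>k\<in>K. norm (c k) * indicator (B i) (x k))"
      by (rule ennreal_leI)
    also have "\<dots> = (\<Sum>k\<in>K. ennreal (norm (c k)) * indicator (B i) (x k))"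
      by (subst sum_ennreal[symmetric]) (auto simp: ennreal_mult ennreal_indicator)
    finally show ?thesis .
  qed
  have "(\<Sum>i. ennreal (norm (f (B i)))) \<le> (\<Sum>i. \<Sum>k\<in>K. ennreal (norm (c k)) * indicator (B i) (x k))"
    by (rule suminf_le[OF pt summableI summableI])
  also have "\<dots> = (\<Sum>k\<in>K. \<Sum>i. ennreal (norm (c k)) * indicator (B i) (x k))"
    by (rule suminf_sum, rule summableI)
  also have "\<dots> = (\<Sum>k\<in>K. ennreal (norm (c k)) * indicator A (x k))"
    using suminf_indicator[OF disj] BA by simp
  also have "\<dots> \<le> (\<Sum>k\<in>K. ennreal (norm (c k)))"
    by (intro sum_mono) (auto simp: indicator_def)
  also have "\<dots> = ennreal (\<Sum>k\<in>K. norm (c k))"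
    by (rule sum_ennreal) simp
  finally show "(\<Sum>i. ennreal (norm (f (B i)))) \<le> ennreal (\<Sum>k\<in>K. norm (c k))" .
qed

lemma Pi_fin:
  assumes t: "t \<noteq> 0" and g: "good t (pi_meas \<eta> \<mu>)" and B: "B \<in> sets borel"
    and K: "finite K" "{k. t * real k \<in> B} \<subseteq> K"
  shows "Pi_meas \<eta> \<mu> B m = (\<Sum>k\<in>K. (\<Sum>l\<le>m. (cf t (pi_meas \<eta> \<mu>) ^ l) $ k) * of_real (indicator B (t * real k)))"
proof -
  have "Pi_meas \<eta> \<mu> B m = (\<Sum>l\<le>m. \<Sum>k\<in>K. (cf t (pi_meas \<eta> \<mu>) ^ l) $ k * of_real (indicator B (t * real k)))"
    unfolding Pi_meas_def
  proof (rule sum.cong)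
    fix l
    show "cm_val (cm_pow (pi_meas \<eta> \<mu>) l) B = (\<Sum>k\<in>K. (cf t (pi_meas \<eta> \<mu>) ^ l) $ k * of_real (indicator B (t * real k)))"
    proof -
      have gl: "good t (cm_pow (pi_meas \<eta> \<mu>) l)" and cl: "cf t (cm_pow (pi_meas \<eta> \<mu>) l) = cf t (pi_meas \<eta> \<mu>) ^ l"
        using cf_pow[OF t g, of l] by auto
      show ?thesis unfolding cm_val_fin[OF t gl B K] cl ..
    qed
  qed simp
  also have "\<dots> = (\<Sum>k\<in>K. (\<Sum>l\<le>m. (cf t (pi_meas \<eta> \<mu>) ^ l) $ k) * of_real (indicator B (t * real k)))"
    by (subst sum.swap) (simp add: sum_distrib_right)
  finally show ?thesis .
qed

lemma dconv_fps:
  fixes u :: "int \<Rightarrow> real" and R :: "complex fps"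
  assumes u: "\<And>z. z < 0 \<Longrightarrow> u z = 0" and R: "\<And>k. R $ k = of_real (u (int k))"
  shows "(z < 0 \<longrightarrow> dconv_pow u j z = 0) \<and> (\<forall>k. of_real (dconv_pow u j (int k)) = (R ^ j) $ k)"
proof (induction j arbitrary: z)
  case 0
  show ?case by simp
next
  case (Suc j)
  have neg: "dconv_pow u j y = 0" if "y < 0" for y using Suc.IH that by blast
  have pos: "of_real (dconv_pow u j (int k)) = (R ^ j) $ k" for k using Suc.IH by blast
  have A: "dconv_pow u (Suc j) z = 0" if "z < 0" for z
  proof -
    have "(\<lambda>y. u (z - y) * dconv_pow u j y) = (\<lambda>_. 0)"
    proof
      fix y show "u (z - y) * dconv_pow u j y = 0"
        using neg[of y] u[of "z - y"] that by (cases "y < 0") auto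
    qed
    then show ?thesis by simp
  qed
  have B: "of_real (dconv_pow u (Suc j) (int k)) = (R ^ Suc j) $ k" for k
  proof -
    let ?f = "\<lambda>y. u (int k - y) * dconv_pow u j y"
    have "dconv_pow u (Suc j) (int k) = infsum ?f UNIV" by simp
    also have "\<dots> = infsum ?f (int ` {0..k})"
    proof (rule infsum_cong_neutral)
      fix y assume "y \<in> UNIV - int ` {0..k}"
      then have "y < 0 \<or> int k - y < 0"
      proof (cases "y < 0")
        case False
        then have yy: "y = int (nat y)" by simp
        have "nat y \<notin> {0..k}"
        proof
          assume "nat y \<in> {0..k}"
          then have "int (nat y) \<in> int ` {0..k}" by (rule imageI)
          then show False using \<open>y \<in> UNIV - int ` {0..k}\<close> yy by simp
        qed
        then show ?thesis using False by auto
      qed simp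
      then show "?f y = 0" using neg[of y] u[of "int k - y"] by auto
    qed auto
    also have "\<dots> = infsum (?f \<circ> int) {0..k}"
      by (rule infsum_reindex) simp
    also have "\<dots> = (\<Sum>i=0..k. u (int k - int i) * dconv_pow u j (int i))"
      by simp
    finally have "of_real (dconv_pow u (Suc j) (int k)) = (\<Sum>i=0..k. of_real (u (int (k - i))) * of_real (dconv_pow u j (int i)) :: complex)"
      by (simp add: of_nat_diff)
    also have "\<dots> = (\<Sum>i=0..k. (R ^ j) $ i * R $ (k - i))"
      by (intro sum.cong) (simp_all add: pos R mult.commute)
    also have "\<dots> = (R ^ Suc j) $ k"
      by (simp add: power_Suc2 fps_mult_nth del: power_Suc)
    finally show ?thesis .
  qed
  show ?case using A B by blast
qed

lemma K_finite:
  assumes "m_tA t A < \<infinity>"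
  shows "finite {k::nat. t * real k \<in> A}"
proof -
  have le: "ereal (real k) \<le> m_tA t A" if "t * real k \<in> A" for k
    unfolding m_tA_def by (rule Sup_upper) (use that in \<open>auto intro!: image_eqI[of _ _ "int k"]\<close>)
  obtain r where r: "m_tA t A \<le> ereal r"
    using assms by (cases "m_tA t A") auto
  have "{k::nat. t * real k \<in> A} \<subseteq> {..nat \<lceil>r\<rceil>}"
  proof
    fix k assume "k \<in> {k::nat. t * real k \<in> A}"
    then have "ereal (real k) \<le> ereal r" using order.trans[OF le[of k] r] by simp
    then have "real k \<le> r" by simp
    then show "k \<in> {..nat \<lceil>r\<rceil>}" by (auto simp: nat_le_iff le_ceiling_iff) linarith
  qed
  then show ?thesis by (rule finite_subset) simp
qed

lemma K_le:
  assumes "ereal (real m0) \<ge> m_tA t A" "t * real k \<in> A"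
  shows "k \<le> m0"
proof -
  have "ereal (real k) \<le> m_tA t A"
    unfolding m_tA_def by (rule Sup_upper) (use assms(2) in \<open>auto intro!: image_eqI[of _ _ "int k"]\<close>)
  with assms(1) have "ereal (real k) \<le> ereal (real m0)" by (rule order.trans[rotated])
  then show ?thesis by simp
qed

lemma fps_const_m1: "fps_const (-1) * f = - (f::complex fps)"
  by (simp add: fps_const_mult_left fps_eq_iff)

theorem theorem3:
  fixes P :: "'a measure" and \<epsilon> :: "'a \<Rightarrow> real"
    and z\<^sub>0 t :: real and A :: "real set"
  assumes "prob_space P"
    and "\<epsilon> \<in> borel_measurable P"
    and "t > 0"
    and "measure P {\<omega> \<in> space P. \<epsilon> \<omega> \<in> {z\<^sub>0 + t * real z | z. True}} = 1"
    and "measure (distr P borel \<epsilon>) {z\<^sub>0} > 0"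
    and "A \<in> sets borel"
    and "m_tA t A < \<infinity>"
  shows
    "(let \<mu>\<epsilon> = distr P borel \<epsilon>;
          F = (\<lambda>x. measure \<mu>\<epsilon> {x});
          lam = 1 / F z\<^sub>0;
          u = (\<lambda>z::int. (if z = 0 then 1 else 0) - lam * F (z\<^sub>0 + t * real_of_int z))
      in (SUP m. total_variation (\<lambda>B. Pi_meas (cm_dirac (- z\<^sub>0)) \<mu>\<epsilon> B m) A) < \<infinity>
       \<and> (\<forall>m\<^sub>0::nat. ereal (real m\<^sub>0) \<ge> m_tA t A \<longrightarrow>
            (\<lambda>m. Pi_meas (cm_dirac (- z\<^sub>0)) \<mu>\<epsilon> A m)
              \<longlonglongrightarrow> complex_of_real lam * Pi_meas (cm_scale (complex_of_real lam) (cm_dirac (- z\<^sub>0))) \<mu>\<epsilon> A m\<^sub>0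
          \<and> complex_of_real lam * Pi_meas (cm_scale (complex_of_real lam) (cm_dirac (- z\<^sub>0))) \<mu>\<epsilon> A m\<^sub>0
            = complex_of_real lam * (\<Sum>z. complex_of_real (gamma_seq u (int z) * indicator A (t * real z)))))"
proof -
  interpret prob_space P by (rule assms(1))
  note eps[measurable] = assms(2)
  define \<mu> where "\<mu> = distr P borel \<epsilon>"
  define F where "F = (\<lambda>x. measure \<mu> {x})"
  define lam where "lam = 1 / F z\<^sub>0"
  define u where "u = (\<lambda>z::int. (if z = 0 then 1 else 0) - lam * F (z\<^sub>0 + t * real_of_int z))"
  define p where "p = (\<lambda>k. measure (distr P borel \<epsilon>) {z\<^sub>0 + t * real k})"
  define lamc where "lamc = complex_of_real lam"
  define Fp where "Fp = mfps p"
  define R where "R = 1 - fps_const lamc * Fp"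
  define K where "K = {k::nat. t * real k \<in> A}"
  have tne: "t \<noteq> 0" using assms(3) by simp
  have p0: "p 0 = F z\<^sub>0" by (simp add: p_def F_def \<mu>_def)
  have ppos: "F z\<^sub>0 > 0" using assms(5) by (simp add: F_def \<mu>_def)
  have ple1: "F z\<^sub>0 \<le> 1"
    unfolding F_def \<mu>_def by (rule prob_space.prob_le_1[OF prob_space_distr]) simp
  have pnn: "\<And>k. p k \<ge> 0" by (simp add: p_def)
  have psum: "summable p" using shifted_summable[OF assms(1-4)] by (simp add: p_def)
  have shl: "return borel (- z\<^sub>0) \<star> \<mu> = lat t p"
    using shifted_lat[OF assms(1-4)] by (simp add: p_def \<mu>_def)
  have Fp0: "Fp $ 0 = of_real (F z\<^sub>0)" using p0 by (simp add: Fp_def mfps_def)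
  have pi1: "pi_meas (cm_dirac (- z\<^sub>0)) \<mu> = cm_dirac 0 @ cm_scale (-1) [(1, lat t p)]"
    by (simp add: pi_meas_def cm_minus_def cm_conv_def cm_dirac_def shl)
  have g1: "good t (pi_meas (cm_dirac (- z\<^sub>0)) \<mu>)"
    unfolding pi1 using good_dirac0 pnn psum by (auto intro!: good_scale exI[of _ p])
  have c1: "cf t (pi_meas (cm_dirac (- z\<^sub>0)) \<mu>) = 1 - Fp"
    unfolding pi1 by (simp add: cf_dirac0[OF tne] cf_scale cf_Cons[OF tne pnn] Fp_def fps_const_m1)
  have pi2: "pi_meas (cm_scale lamc (cm_dirac (- z\<^sub>0))) \<mu> = cm_dirac 0 @ cm_scale (-1) [(lamc, lat t p)]"
    by (simp add: pi_meas_def cm_minus_def cm_conv_def cm_dirac_def cm_scale_def shl)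
  have g2: "good t (pi_meas (cm_scale lamc (cm_dirac (- z\<^sub>0))) \<mu>)"
    unfolding pi2 using good_dirac0 pnn psum by (auto intro!: good_scale exI[of _ p])
  have c2: "cf t (pi_meas (cm_scale lamc (cm_dirac (- z\<^sub>0))) \<mu>) = R"
    unfolding pi2 by (simp add: cf_dirac0[OF tne] cf_scale cf_Cons[OF tne pnn] Fp_def fps_const_m1 R_def)
  have Kfin: "finite K" unfolding K_def by (rule K_finite[OF assms(7)])
  have subK: "B \<subseteq> A \<Longrightarrow> {k. t * real k \<in> B} \<subseteq> K" for B unfolding K_def by auto
  have P0: "(1 - Fp) $ 0 = complex_of_real (1 - F z\<^sub>0)" using Fp0 by simp
  have nP: "norm ((1 - Fp) $ 0) < 1" unfolding P0 norm_of_real using ppos ple1 by simp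
  define C where "C = (\<Sum>k\<in>K. \<Sum>l. norm (((1 - Fp) ^ l) $ k))"
  have TV: "total_variation (\<lambda>B. Pi_meas (cm_dirac (- z\<^sub>0)) \<mu> B m) A \<le> ennreal C" for m
  proof -
    have "total_variation (\<lambda>B. Pi_meas (cm_dirac (- z\<^sub>0)) \<mu> B m) A \<le> ennreal (\<Sum>k\<in>K. norm (\<Sum>l\<le>m. ((1 - Fp) ^ l) $ k))"
    proof (rule tv_bound[OF Kfin])
      fix B :: "real set" assume B: "B \<in> sets borel" "B \<subseteq> A"
      show "Pi_meas (cm_dirac (- z\<^sub>0)) \<mu> B m = (\<Sum>k\<in>K. (\<Sum>l\<le>m. ((1 - Fp) ^ l) $ k) * of_real (indicator B (t * real k)))"
        using Pi_fin[OF tne g1 B(1) Kfin subK[OF B(2)], of m] c1 by simp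
    qed
    also have "\<dots> \<le> ennreal C"
    proof (rule ennreal_leI)
      show "(\<Sum>k\<in>K. norm (\<Sum>l\<le>m. ((1 - Fp) ^ l) $ k)) \<le> C"
        unfolding C_def
      proof (rule sum_mono)
        fix k
        have "norm (\<Sum>l\<le>m. ((1 - Fp) ^ l) $ k) \<le> (\<Sum>l\<le>m. norm (((1 - Fp) ^ l) $ k))"
          by (rule norm_sum)
        also have "\<dots> \<le> (\<Sum>l. norm (((1 - Fp) ^ l) $ k))"
          by (rule sum_le_suminf[OF fps_pow_summable[OF nP]]) auto
        finally show "norm (\<Sum>l\<le>m. ((1 - Fp) ^ l) $ k) \<le> (\<Sum>l. norm (((1 - Fp) ^ l) $ k))" .
      qed
    qed
    finally show ?thesis .
  qed
  have "(SUP m. total_variation (\<lambda>B. Pi_meas (cm_dirac (- z\<^sub>0)) \<mu> B m) A) \<le> ennreal C"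
    by (rule SUP_least) (rule TV)
  then have part1: "(SUP m. total_variation (\<lambda>B. Pi_meas (cm_dirac (- z\<^sub>0)) \<mu> B m) A) < \<infinity>"
    using ennreal_less_top[of C] by (simp add: le_less_trans)
  have R0: "R $ 0 = 0" using Fp0 ppos by (simp add: R_def lamc_def lam_def)
  have uneg: "u z = 0" if "z < 0" for z
  proof -
    have "z\<^sub>0 + t * real_of_int z \<notin> {z\<^sub>0 + t * real z | z. True}"
    proof
      assume "z\<^sub>0 + t * real_of_int z \<in> {z\<^sub>0 + t * real z | z. True}"
      then obtain n :: nat where "z\<^sub>0 + t * real_of_int z = z\<^sub>0 + t * real n" by auto
      then have "real_of_int z = real n" using tne by simp
      then show False using that by linarith
    qed
    then have "F (z\<^sub>0 + t * real_of_int z) = 0"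
      unfolding F_def \<mu>_def by (rule off_lattice[OF assms(1,2,4)])
    then show ?thesis using that by (simp add: u_def)
  qed
  have Rk: "R $ k = of_real (u (int k))" for k
    by (simp add: R_def u_def lamc_def Fp_def mfps_def p_def F_def \<mu>_def)
  have gam: "complex_of_real (gamma_seq u (int k)) = (\<Sum>j=0..k. (R ^ j) $ k)" for k
  proof -
    have "complex_of_real (gamma_seq u (int k)) = (\<Sum>j=0..k. complex_of_real (dconv_pow u j (int k)))"
      by (simp add: gamma_seq_def)
    also have "\<dots> = (\<Sum>j=0..k. (R ^ j) $ k)"
      using dconv_fps[OF uneg Rk] by simp
    finally show ?thesis .
  qed
  have part2: "(\<lambda>m. Pi_meas (cm_dirac (- z\<^sub>0)) \<mu> A m) \<longlonglongrightarrow> lamc * Pi_meas (cm_scale lamc (cm_dirac (- z\<^sub>0))) \<mu> A m\<^sub>0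
          \<and> lamc * Pi_meas (cm_scale lamc (cm_dirac (- z\<^sub>0))) \<mu> A m\<^sub>0
            = lamc * (\<Sum>z. complex_of_real (gamma_seq u (int z) * indicator A (t * real z)))"
    if m0: "ereal (real m\<^sub>0) \<ge> m_tA t A" for m\<^sub>0
  proof -
    have Kle: "k \<le> m\<^sub>0" if "k \<in> K" for k using K_le[OF m0] that by (simp add: K_def)
    have indA: "indicator A (t * real k) = (1::real)" if "k \<in> K" for k using that by (simp add: K_def)
    have PiA: "Pi_meas (cm_dirac (- z\<^sub>0)) \<mu> A m = (\<Sum>k\<in>K. \<Sum>l\<le>m. ((1 - Fp) ^ l) $ k)" for m
      using Pi_fin[OF tne g1 assms(6) Kfin subK[OF order.refl], of m] c1 indA by simp
    have Pi2A: "Pi_meas (cm_scale lamc (cm_dirac (- z\<^sub>0))) \<mu> A m\<^sub>0 = (\<Sum>k\<in>K. \<Sum>l\<le>m\<^sub>0. (R ^ l) $ k)"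
      using Pi_fin[OF tne g2 assms(6) Kfin subK[OF order.refl], of m\<^sub>0] c2 indA by simp
    have lim: "(\<lambda>m. Pi_meas (cm_dirac (- z\<^sub>0)) \<mu> A m) \<longlonglongrightarrow> lamc * Pi_meas (cm_scale lamc (cm_dirac (- z\<^sub>0))) \<mu> A m\<^sub>0"
    proof -
      have e: "lamc * Pi_meas (cm_scale lamc (cm_dirac (- z\<^sub>0))) \<mu> A m\<^sub>0 = (\<Sum>k\<in>K. lamc * (\<Sum>l\<le>m\<^sub>0. (R ^ l) $ k))"
        unfolding Pi2A by (rule sum_distrib_left)
      show ?thesis unfolding PiA e
    proof (rule tendsto_sum)
      fix k assume "k \<in> K"
      show "(\<lambda>m. \<Sum>l\<le>m. ((1 - Fp) ^ l) $ k) \<longlonglongrightarrow> lamc * (\<Sum>l\<le>m\<^sub>0. (R ^ l) $ k)"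
        using fps_limit[OF Fp0 ppos ple1 Kle[OF \<open>k \<in> K\<close>]] by (simp add: R_def lamc_def lam_def)
    qed
    qed
    have "(\<Sum>z. complex_of_real (gamma_seq u (int z) * indicator A (t * real z)))
        = (\<Sum>z\<in>K. complex_of_real (gamma_seq u (int z) * indicator A (t * real z)))"
      by (rule suminf_finite[OF Kfin]) (simp add: K_def)
    also have "\<dots> = (\<Sum>k\<in>K. \<Sum>l\<le>m\<^sub>0. (R ^ l) $ k)"
    proof (rule sum.cong)
      fix k assume k: "k \<in> K"
      have "complex_of_real (gamma_seq u (int k) * indicator A (t * real k)) = (\<Sum>j=0..k. (R ^ j) $ k)"
        using gam[of k] indA[OF k] by simp
      also have "\<dots> = (\<Sum>l\<le>m\<^sub>0. (R ^ l) $ k)"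
      proof (rule sum.mono_neutral_left)
        show "{0..k} \<subseteq> {..m\<^sub>0}" using Kle[OF k] by auto
        show "\<forall>i\<in>{..m\<^sub>0} - {0..k}. (R ^ i) $ k = 0"
          using fps_pow_nth_small[OF R0] by auto
      qed simp
      finally show "complex_of_real (gamma_seq u (int k) * indicator A (t * real k)) = (\<Sum>l\<le>m\<^sub>0. (R ^ l) $ k)" .
    qed simp
    finally have "Pi_meas (cm_scale lamc (cm_dirac (- z\<^sub>0))) \<mu> A m\<^sub>0 = (\<Sum>z. complex_of_real (gamma_seq u (int z) * indicator A (t * real z)))"
      using Pi2A by simp
    with lim show ?thesis by simp
  qed
  show ?thesis
    using part1 part2 unfolding Let_def \<mu>_def F_def lam_def u_def lamc_def by blast
qed

end
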